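(* Under Weak Ordering, in the limit $m\to\infty$, $\Pr[B_0]=2/3$ and $\Pr[B_\gamma]=2^{-\gamma}/3$ for every integer $\gamma>0$.
   Context: Fix $m\ge 1$. A random program is a sequence $x_1,\dots,x_{m+2}$ of memory operations, each with a type in $\{\mathrm{LD},\mathrm{ST}\}$: $x_1,\dots,x_m$ have i.i.d. types, each $\mathrm{ST}$ with probability $1/2$ and $\mathrm{LD}$ with probability $1/2$; $x_{m+1}$ (the critical load) has type $\mathrm{LD}$ and $x_{m+2}$ (the critical store) has type $\mathrm{ST}$. The initial order is $S_0=(x_1,\dots,x_{m+2})$. A memory model is specified by the set of ordered type pairs $(\tau_1,\tau_2)$ for which an instruction of type $\tau_2$ may be moved ahead of an immediately preceding instruction of type $\tau_1$: Sequential Consistency (SC) allows no pair; Total Store Order (TSO) allows only the pair $(\mathrm{ST},\mathrm{LD})$ (a load may move ahead of a preceding store); Weak Ordering (WO) allows all four pairs. The settling process runs rounds $r=1,\dots,m+2$. Before round $r$, the current order $S_{r-1}$ consists of $x_1,\dots,x_{r-1}$ in some order in positions $1,\dots,r-1$, followed by $x_r,\dots,x_{m+2}$ in positions $r,\dots,m+2$. In round $r$, instruction $x_r$ (starting at position $r$) repeatedly attempts to swap with the instruction immediately preceding it in the current order: the attempt fails automatically if the pair (type of the preceding instruction, type of $x_r$) is not allowed by the memory model, or if $x_r$ is the critical store and the preceding instruction is the critical load; otherwise the attempt succeeds independently with probability $1/2$. The round ends when an attempt fails or $x_r$ reaches position $1$; the resulting order is $S_r$. The final order is $S_{m+2}$.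 For $\gamma\ge 0$, $B_\gamma$ is the event that in $S_{m+2}$ exactly $\gamma$ instructions lie strictly between the critical load and the critical store. *)

theory Defs
  imports "HOL-Probability.Probability"
begin

datatype optype = LD | ST

text \<open>Memory models: the set of ordered type pairs (tau1, tau2) such that an instruction
  of type tau2 may move ahead of an immediately preceding instruction of type tau1.\<close>
definition SC :: "(optype \<times> optype) set" where "SC = {}"
definition TSO :: "(optype \<times> optype) set" where "TSO = {(ST, LD)}"
definition WO :: "(optype \<times> optype) set" where "WO = UNIV"

fun types_pmf :: "nat \<Rightarrow> optype list pmf" where
  "types_pmf 0 = return_pmf []"
| "types_pmf (Suc n) =
     bind_pmf (pmf_of_set {LD, ST}) (\<lambda>t. bind_pmf (types_pmf n) (\<lambda>ts. return_pmf (t # ts)))"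

text \<open>Instructions are labelled 1..m+2; label m+1 is the critical load, m+2 the critical store. The moving instruction sits at (0-based) list index p and
  repeatedly attempts to swap with its predecessor.\<close>
fun move :: "(optype \<times> optype) set \<Rightarrow> (nat \<Rightarrow> optype) \<Rightarrow> nat \<Rightarrow> nat list \<Rightarrow> nat \<Rightarrow> nat list pmf" where
  "move A ty m ord 0 = return_pmf ord"
| "move A ty m ord (Suc p) =
     (let prev = ord ! p; cur = ord ! Suc p in
      if (ty prev, ty cur) \<notin> A \<or> (cur = m + 2 \<and> prev = m + 1) then return_pmf ord
      else bind_pmf (bernoulli_pmf (1/2))
             (\<lambda>b. if b then move A ty m (ord[p := cur, Suc p := prev]) p else return_pmf ord))"

text \<open>Rounds r = 1..m+2: instruction x_r starts at position r (list index r-1).\<close>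
definition settle :: "(optype \<times> optype) set \<Rightarrow> (nat \<Rightarrow> optype) \<Rightarrow> nat \<Rightarrow> nat list pmf" where
  "settle A ty m = foldl (\<lambda>P r. bind_pmf P (\<lambda>ord. move A ty m ord (r - 1)))
                        (return_pmf [1..<m + 3]) [1..<m + 3]"

definition type_of :: "optype list \<Rightarrow> nat \<Rightarrow> optype" where
  "type_of tys i = (tys @ [LD, ST]) ! (i - 1)"

definition final_order :: "(optype \<times> optype) set \<Rightarrow> nat \<Rightarrow> nat list pmf" where
  "final_order A m = bind_pmf (types_pmf m) (\<lambda>tys. settle A (type_of tys) m)"

definition B_event :: "nat \<Rightarrow> nat \<Rightarrow> nat list \<Rightarrow> bool" where
  "B_event m \<gamma> ord \<longleftrightarrow> (\<exists>i j. i < length ord \<and> j < length ord \<and> ord ! i = m + 1 \<and> ord ! j = m + 2 \<and>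
      (if i < j then j - i - 1 else i - j - 1) = \<gamma>)"

end

theory Submission imports Defs begin


fun g :: "nat \<Rightarrow> nat pmf" where
  "g 0 = return_pmf 0"
| "g (Suc c) = bind_pmf (bernoulli_pmf (1/2)) (\<lambda>b. if b then map_pmf Suc (g c) else return_pmf 0)"

lemma set_g: "set_pmf (g c) \<subseteq> {..c}"
  by (induction c) (auto split: if_splits)

lemma pmf_bern_half: "pmf (bind_pmf (bernoulli_pmf (1/2)) f) x = (pmf (f True) x + pmf (f False) x) / 2"
  by (simp add: pmf_bind)

lemma pmf_g: "k \<le> c \<Longrightarrow> pmf (g c) k = (if k < c then (1/2)^(k+1) else (1/2)^c)"
proof (induction c arbitrary: k)
  case 0 then show ?case by simp
next
  case (Suc c)
  show ?case
  proof (cases k)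
    case 0 then show ?thesis by (simp add: pmf_bern_half pmf_map_outside)
  next
    case (Suc k')
    have "pmf (map_pmf Suc (g c)) (Suc k') = pmf (g c) k'" by (rule pmf_map_inj') simp
    then show ?thesis using Suc.IH[of k'] Suc.prems Suc by (simp add: pmf_bern_half)
  qed
qed

definition mvs :: "nat list \<Rightarrow> nat \<Rightarrow> nat \<Rightarrow> nat list" where
  "mvs ord p k = map (\<lambda>i. if i < p - k then ord!i else if i = p - k then ord!p
     else if i \<le> p then ord!(i-1) else ord!i) [0..<length ord]"

lemma length_mvs[simp]: "length (mvs ord p k) = length ord"
  by (simp add: mvs_def)

lemma nth_mvs: "i < length ord \<Longrightarrow> mvs ord p k ! i = (if i < p - k then ord!i else if i = p - k then ord!p
     else if i \<le> p then ord!(i-1) else ord!i)"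
  by (simp add: mvs_def)

lemma mvs0: "p < length ord \<Longrightarrow> mvs ord p 0 = ord"
  by (rule nth_equalityI) (auto simp: nth_mvs)

lemma mvs_swap: "Suc p < length ord \<Longrightarrow> k \<le> p \<Longrightarrow>
  mvs (ord[p := ord!Suc p, Suc p := ord!p]) p k = mvs ord (Suc p) (Suc k)"
  by (rule nth_equalityI) (auto simp: nth_mvs nth_list_update le_Suc_eq)

lemma notin_WO[simp]: "(x \<notin> WO) = False" by (simp add: WO_def)

lemma move_shift:
  assumes "p < length ord" "c \<le> p"
    "\<forall>k<c. \<not>(ord!p = m+2 \<and> ord!(p - Suc k) = m+1)"
    "c < p \<longrightarrow> (ord!p = m+2 \<and> ord!(p - Suc c) = m+1)"
  shows "move WO ty m ord p = map_pmf (mvs ord p) (g c)"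
  using assms
proof (induction p arbitrary: ord c)
  case 0 then show ?case by (simp add: mvs0)
next
  case (Suc p)
  show ?case
  proof (cases c)
    case 0
    then show ?thesis using Suc.prems by (simp add: mvs0)
  next
    case (Suc c')
    define ord' where "ord' = ord[p := ord!Suc p, Suc p := ord!p]"
    have ne: "\<not>(ord!Suc p = m+2 \<and> ord!p = m+1)" using Suc.prems(3) Suc by auto
    have IH: "move WO ty m ord' p = map_pmf (mvs ord' p) (g c')"
    proof (rule Suc.IH)
      show "p < length ord'" using Suc.prems by (simp add: ord'_def)
      show "c' \<le> p" using Suc.prems Suc by simp
      show "\<forall>k<c'. \<not> (ord' ! p = m + 2 \<and> ord' ! (p - Suc k) = m + 1)"
      proof (intro allI impI)
        fix k assume "k < c'"
        then have "\<not>(ord!Suc p = m+2 \<and> ord!(Suc p - Suc (Suc k)) = m+1)" using Suc.prems(3) Suc by blast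
        then show "\<not> (ord' ! p = m + 2 \<and> ord' ! (p - Suc k) = m + 1)"
          using Suc.prems(1) by (simp add: ord'_def nth_list_update)
      qed
      show "c' < p \<longrightarrow> ord' ! p = m + 2 \<and> ord' ! (p - Suc c') = m + 1"
        using Suc.prems(1,4) Suc by (auto simp: ord'_def nth_list_update)
    qed
    have "move WO ty m ord (Suc p) = bind_pmf (bernoulli_pmf (1/2))
             (\<lambda>b. if b then move WO ty m ord' p else return_pmf ord)"
      unfolding ord'_def using ne by (auto simp: Let_def)
    also have "\<dots> = bind_pmf (bernoulli_pmf (1/2))
             (\<lambda>b. if b then map_pmf (mvs ord (Suc p) \<circ> Suc) (g c') else return_pmf (mvs ord (Suc p) 0))"
    proof (rule bind_pmf_cong[OF refl])
      fix b
      have "map_pmf (mvs ord' p) (g c') = map_pmf (mvs ord (Suc p) \<circ> Suc) (g c')"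
      proof (rule map_pmf_cong[OF refl])
        fix x assume "x \<in> set_pmf (g c')"
        then have "x \<le> c'" using set_g by blast
        then show "mvs ord' p x = (mvs ord (Suc p) \<circ> Suc) x"
          using Suc.prems Suc by (simp add: ord'_def mvs_swap)
      qed
      then show "(if b then move WO ty m ord' p else return_pmf ord) =
         (if b then map_pmf (mvs ord (Suc p) \<circ> Suc) (g c') else return_pmf (mvs ord (Suc p) 0))"
        using IH Suc.prems by (simp add: mvs0)
    qed
    also have "\<dots> = map_pmf (mvs ord (Suc p)) (g c)"
      by (simp add: Suc map_bind_pmf map_pmf_comp if_distrib comp_def cong: if_cong)
    finally show ?thesis .
  qed
qed



definition Inv :: "nat \<Rightarrow> nat \<Rightarrow> nat list \<Rightarrow> bool" where
  "Inv m r ord \<longleftrightarrow> length ord = m+2 \<and> (\<forall>i. r \<le> i \<and> i < m+2 \<longrightarrow> ord!i = Suc i) \<and> (\<forall>i<r. ord!i \<le> r)"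

definition FF :: "(nat \<Rightarrow> optype) \<Rightarrow> nat \<Rightarrow> nat list pmf \<Rightarrow> nat \<Rightarrow> nat list pmf" where
  "FF ty m = (\<lambda>P r. bind_pmf P (\<lambda>ord. move WO ty m ord (r - 1)))"

lemma move_free:
  assumes "p < length ord" "ord!p \<noteq> m+2"
  shows "move WO ty m ord p = map_pmf (mvs ord p) (g p)"
  by (rule move_shift) (use assms in auto)

lemma Inv_rounds: "r \<le> m \<Longrightarrow> q' \<in> set_pmf (foldl (FF ty m) (return_pmf [1..<m+3]) [1..<r+1]) \<Longrightarrow> Inv m r q'"
proof (induction r arbitrary: q')
  case 0 then show ?case by (simp add: Inv_def)
next
  case (Suc r)
  have "[1..<Suc r + 1] = [1..<r+1] @ [Suc r]" by simp
  then obtain q where q: "q \<in> set_pmf (foldl (FF ty m) (return_pmf [1..<m+3]) [1..<r+1])"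
    and q': "q' \<in> set_pmf (move WO ty m q r)"
    using Suc.prems by (auto simp: FF_def)
  have I: "Inv m r q" using Suc.IH[OF _ q] Suc.prems by simp
  then have "q!r = Suc r" "r < length q" using Suc.prems by (auto simp: Inv_def)
  then have "move WO ty m q r = map_pmf (mvs q r) (g r)" using Suc.prems by (intro move_free) auto
  then obtain k where k: "k \<le> r" and q'k: "q' = mvs q r k" using q' set_g by fastforce
  show ?case unfolding Inv_def
  proof (intro conjI allI impI)
    show "length q' = m+2" using I q'k by (simp add: Inv_def)
    fix i
    { assume "Suc r \<le> i \<and> i < m + 2"
      then show "q' ! i = Suc i" using I q'k by (auto simp: Inv_def nth_mvs) }
    { assume i: "i < Suc r"
      have len: "i < length q" using i I Suc.prems by (simp add: Inv_def)
      have "q ! i \<le> r" if "i < r" using I that by (simp add: Inv_def)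
      moreover have "q ! (i-1) \<le> r" if "i > 0" using I that i by (simp add: Inv_def)
      moreover have "q ! r = Suc r" using I Suc.prems by (simp add: Inv_def)
      moreover have "q' ! i = (if i < r - k then q!i else if i = r - k then q!r
     else if i \<le> r then q!(i-1) else q!i)" by (simp add: q'k nth_mvs[OF len])
      ultimately show "q' ! i \<le> Suc r" using i k
        by (auto split: if_splits) (metis diff_le_self le_SucI order_less_le_trans) }
  qed
qed



lemma o2_facts:
  assumes I: "Inv m m q" and k: "k \<le> m"
  shows "mvs q m k ! (m-k) = m+1" "mvs q m k ! (m+1) = m+2"
    "\<And>i. i < m+1 \<Longrightarrow> i \<noteq> m-k \<Longrightarrow> mvs q m k ! i \<le> m"
proof -
  have len: "length q = m+2" using I by (simp add: Inv_def)
  have qm: "q!m = m+1" "q!(m+1) = m+2" using I by (auto simp: Inv_def)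
  have ql: "\<And>i. i < m \<Longrightarrow> q!i \<le> m" using I by (simp add: Inv_def)
  show "mvs q m k ! (m-k) = m+1" using len qm by (simp add: nth_mvs)
  show "mvs q m k ! (m+1) = m+2" using len qm by (simp add: nth_mvs)
  fix i assume i: "i < m+1" "i \<noteq> m-k"
  then show "mvs q m k ! i \<le> m" using len ql k by (auto simp: nth_mvs)
qed

lemma o3_pos:
  assumes I: "Inv m m q" and k: "k \<le> m" and j: "j \<le> k" and i: "i < m+2"
  shows "(mvs (mvs q m k) (m+1) j ! i = m+1 \<longleftrightarrow> i = m-k) \<and>
         (mvs (mvs q m k) (m+1) j ! i = m+2 \<longleftrightarrow> i = m+1-j)"
proof -
  have len: "length (mvs q m k) = m+2" using I by (simp add: Inv_def)
  note F = o2_facts[OF I k]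
  have e: "mvs (mvs q m k) (m+1) j ! i = (if i < m+1-j then mvs q m k!i else if i = m+1-j then mvs q m k!(m+1)
     else if i \<le> m+1 then mvs q m k!(i-1) else mvs q m k!i)"
    using len i by (simp add: nth_mvs)
  show ?thesis
  proof (cases "i < m+1-j")
    case True
    then have "i < m+1" by auto
    then have "i \<noteq> m-k \<Longrightarrow> mvs q m k ! i \<le> m" using F(3) by blast
    then show ?thesis using True e F(1) j k by (cases "i = m-k") auto
  next
    case False
    then have "i = m+1-j \<or> (i > m+1-j \<and> i \<le> m+1)" using i by auto
    then show ?thesis
    proof
      assume "i = m+1-j" then show ?thesis using e F(2) j k by auto
    next
      assume h: "i > m+1-j \<and> i \<le> m+1"
      then have "mvs q m k ! (i-1) \<le> m" using F(3)[of "i-1"] j k by auto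
      then show ?thesis using e h j k by auto
    qed
  qed
qed

lemma B_char:
  assumes I: "Inv m m q" and k: "k \<le> m" and j: "j \<le> k"
  shows "B_event m \<gamma> (mvs (mvs q m k) (m+1) j) \<longleftrightarrow> k - j = \<gamma>"
proof -
  have len: "length (mvs (mvs q m k) (m+1) j) = m+2" using I by (simp add: Inv_def)
  note P = o3_pos[OF I k j]
  show ?thesis
  proof
    assume "B_event m \<gamma> (mvs (mvs q m k) (m+1) j)"
    then obtain a b where ab: "a < m+2" "b < m+2" "mvs (mvs q m k) (m+1) j ! a = m+1"
       "mvs (mvs q m k) (m+1) j ! b = m+2" "(if a < b then b - a - 1 else a - b - 1) = \<gamma>"
      using len unfolding B_event_def by auto
    then have "a = m-k" "b = m+1-j" using P by auto
    then show "k - j = \<gamma>" using ab(5) j k by auto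
  next
    assume h: "k - j = \<gamma>"
    have "m - k < m+2" "m+1-j < m+2" by auto
    then show "B_event m \<gamma> (mvs (mvs q m k) (m+1) j)"
      unfolding B_event_def using len P h j k
      by (intro exI[of _ "m-k"] exI[of _ "m+1-j"]) auto
  qed
qed

definition E :: "nat \<Rightarrow> nat \<Rightarrow> bool pmf" where
  "E m \<gamma> = bind_pmf (g m) (\<lambda>k. map_pmf (\<lambda>j. k - j = \<gamma>) (g k))"

lemma final_stage:
  assumes I: "Inv m m q"
  shows "map_pmf (B_event m \<gamma>) (bind_pmf (move WO ty m q m) (\<lambda>o2. move WO ty m o2 (m+1))) = E m \<gamma>"
proof -
  have len: "length q = m+2" using I by (simp add: Inv_def)
  have qm: "q!m = m+1" using I by (auto simp: Inv_def)
  have M1: "move WO ty m q m = map_pmf (mvs q m) (g m)"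
    using len qm by (intro move_free) auto
  have M2: "move WO ty m (mvs q m k) (m+1) = map_pmf (mvs (mvs q m k) (m+1)) (g k)" if k: "k \<le> m" for k
  proof (rule move_shift)
    note F = o2_facts[OF I k]
    show "m+1 < length (mvs q m k)" using len by simp
    show "k \<le> m+1" using k by simp
    show "\<forall>k'<k. \<not> (mvs q m k ! (m+1) = m + 2 \<and> mvs q m k ! (m+1 - Suc k') = m + 1)"
    proof (intro allI impI)
      fix k' assume "k' < k"
      then have "mvs q m k ! (m - k') \<le> m" using F(3)[of "m-k'"] k by auto
      then show "\<not> (mvs q m k ! (m+1) = m + 2 \<and> mvs q m k ! (m+1 - Suc k') = m + 1)" by auto
    qed
    show "k < m+1 \<longrightarrow> mvs q m k ! (m+1) = m + 2 \<and> mvs q m k ! (m+1 - Suc k) = m + 1"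
      using F(1,2) by simp
  qed
  have "map_pmf (B_event m \<gamma>) (bind_pmf (move WO ty m q m) (\<lambda>o2. move WO ty m o2 (m+1)))
     = bind_pmf (g m) (\<lambda>k. map_pmf (B_event m \<gamma>) (move WO ty m (mvs q m k) (m+1)))"
    by (simp add: M1 map_bind_pmf bind_map_pmf)
  also have "\<dots> = E m \<gamma>" unfolding E_def
  proof (rule bind_pmf_cong[OF refl])
    fix k assume "k \<in> set_pmf (g m)"
    then have k: "k \<le> m" using set_g by blast
    show "map_pmf (B_event m \<gamma>) (move WO ty m (mvs q m k) (m+1)) = map_pmf (\<lambda>j. k - j = \<gamma>) (g k)"
      unfolding M2[OF k] map_pmf_comp
    proof (rule map_pmf_cong[OF refl])
      fix j assume "j \<in> set_pmf (g k)"
      then have "j \<le> k" using set_g by blast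
      then show "B_event m \<gamma> (mvs (mvs q m k) (m+1) j) = (k - j = \<gamma>)" using B_char[OF I k] by blast
    qed
  qed
  finally show ?thesis .
qed



lemma upt_split: "[1..<m+3] = [1..<m+1] @ [m+1, m+2]"
  by (simp add: numeral_3_eq_3)

lemma settle_map: "map_pmf (B_event m \<gamma>) (settle WO ty m) = E m \<gamma>"
proof -
  define R where "R = foldl (FF ty m) (return_pmf [1..<m+3]) [1..<m+1]"
  have "settle WO ty m = foldl (FF ty m) (return_pmf [1..<m+3]) [1..<m+3]"
    by (simp add: settle_def FF_def)
  also have "\<dots> = bind_pmf (bind_pmf R (\<lambda>q. move WO ty m q m)) (\<lambda>o2. move WO ty m o2 (m+1))"
    unfolding upt_split R_def by (simp add: FF_def)
  finally have S: "settle WO ty m = bind_pmf R (\<lambda>q. bind_pmf (move WO ty m q m) (\<lambda>o2. move WO ty m o2 (m+1)))"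
    by (simp add: bind_assoc_pmf)
  have "map_pmf (B_event m \<gamma>) (settle WO ty m) = bind_pmf R (\<lambda>q. map_pmf (B_event m \<gamma>) (bind_pmf (move WO ty m q m) (\<lambda>o2. move WO ty m o2 (m+1))))"
    by (simp add: S map_bind_pmf)
  also have "\<dots> = bind_pmf R (\<lambda>_. E m \<gamma>)"
  proof (rule bind_pmf_cong[OF refl])
    fix q assume "q \<in> set_pmf R"
    then have "Inv m m q" using Inv_rounds[of m m q ty] by (simp add: R_def)
    then show "map_pmf (B_event m \<gamma>) (bind_pmf (move WO ty m q m) (\<lambda>o2. move WO ty m o2 (m+1))) = E m \<gamma>"
      by (rule final_stage)
  qed
  finally show ?thesis by simp
qed

lemma prob_E: "measure_pmf.prob (final_order WO m) {ord. B_event m \<gamma> ord} = pmf (E m \<gamma>) True"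
proof -
  have "map_pmf (B_event m \<gamma>) (final_order WO m) = E m \<gamma>"
    by (simp add: final_order_def map_bind_pmf settle_map)
  then have "pmf (E m \<gamma>) True = measure_pmf.prob (final_order WO m) (B_event m \<gamma> -` {True})"
    by (metis pmf_map)
  moreover have "B_event m \<gamma> -` {True} = {ord. B_event m \<gamma> ord}" by auto
  ultimately show ?thesis by simp
qed

definition bb :: "nat \<Rightarrow> nat \<Rightarrow> real" where
  "bb \<gamma> k = pmf (map_pmf (\<lambda>j. k - j = \<gamma>) (g k)) True"

lemma pmf_E: "pmf (E m \<gamma>) True = (\<Sum>k<m. (1/2)^(k+1) * bb \<gamma> k) + (1/2)^m * bb \<gamma> m"
proof -
  have "pmf (E m \<gamma>) True = (\<Sum>k\<in>{..m}. pmf (g m) k * bb \<gamma> k)"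
    unfolding E_def pmf_bind bb_def
    by (subst integral_measure_pmf[of "{..m}"]) (use set_g in auto)
  also have "\<dots> = (\<Sum>k<m. pmf (g m) k * bb \<gamma> k) + pmf (g m) m * bb \<gamma> m"
    by (simp add: lessThan_Suc_atMost[symmetric])
  also have "\<dots> = (\<Sum>k<m. (1/2)^(k+1) * bb \<gamma> k) + (1/2)^m * bb \<gamma> m"
    by (simp add: pmf_g)
  finally show ?thesis .
qed

lemma bb_val: "bb \<gamma> k = (if \<gamma> \<le> k then pmf (g k) (k - \<gamma>) else 0)"
proof -
  have "map_pmf (\<lambda>j. k - j = \<gamma>) (g k) = map_pmf (\<lambda>j. j \<in> (if \<gamma> \<le> k then {k - \<gamma>} else {})) (g k)"
  proof (rule map_pmf_cong[OF refl])
    fix j assume "j \<in> set_pmf (g k)"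
    then have "j \<le> k" using set_g by blast
    then show "(k - j = \<gamma>) = (j \<in> (if \<gamma> \<le> k then {k - \<gamma>} else {}))" by auto
  qed
  then have "bb \<gamma> k = measure_pmf.prob (g k) (if \<gamma> \<le> k then {k - \<gamma>} else {})"
    unfolding bb_def by (simp only: \<open>map_pmf _ _ = _\<close> pmf_map) (simp add: vimage_def)
  then show ?thesis by (simp add: measure_pmf_single)
qed

lemma bb0: "bb 0 k = (1/2)^k"
  by (simp add: bb_val pmf_g)

lemma bbpos: "\<gamma> > 0 \<Longrightarrow> bb \<gamma> k = (if \<gamma> \<le> k then (1/2)^(k-\<gamma>+1) else 0)"
  by (simp add: bb_val pmf_g)

lemma bb_bounds: "0 \<le> bb \<gamma> k" "bb \<gamma> k \<le> 1"
  by (simp_all add: bb_def pmf_le_1)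

lemma lim_gen:
  assumes "(\<lambda>k. (1/2)^(k+1) * bb \<gamma> k) sums L"
  shows "(\<lambda>m. (\<Sum>k<m. (1/2)^(k+1) * bb \<gamma> k) + (1/2::real)^m * bb \<gamma> m) \<longlonglongrightarrow> L"
proof -
  have 1: "(\<lambda>m. \<Sum>k<m. (1/2::real)^(k+1) * bb \<gamma> k) \<longlonglongrightarrow> L" using assms by (simp add: sums_def)
  have z: "(\<lambda>m. (1/2::real)^m) \<longlonglongrightarrow> 0" by (rule LIMSEQ_realpow_zero) auto
  have 2: "(\<lambda>m. (1/2::real)^m * bb \<gamma> m) \<longlonglongrightarrow> 0"
  proof (rule tendsto_sandwich[OF _ _ tendsto_const z])
    show "\<forall>\<^sub>F n in sequentially. 0 \<le> (1/2::real)^n * bb \<gamma> n" using bb_bounds by simp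
    show "\<forall>\<^sub>F n in sequentially. (1/2::real)^n * bb \<gamma> n \<le> (1/2)^n"
      using bb_bounds(2) by (intro always_eventually allI) (simp add: mult_left_le)
  qed
  show ?thesis using tendsto_add[OF 1 2] by simp
qed

lemma sums0: "(\<lambda>k. (1/2::real)^(k+1) * bb 0 k) sums (2/3)"
proof -
  have "(\<lambda>k. (1/2::real) * (1/4)^k) sums ((1/2) * (1 / (1 - 1/4)))"
    by (intro sums_mult geometric_sums) auto
  moreover have "(\<lambda>k. (1/2::real)^(k+1) * bb 0 k) = (\<lambda>k. (1/2::real) * (1/4)^k)"
    by (auto simp: bb0 power_mult_distrib[symmetric] fun_eq_iff)
  ultimately show ?thesis by simp
qed

lemma sumspos: assumes "\<gamma> > 0" shows "(\<lambda>k. (1/2::real)^(k+1) * bb \<gamma> k) sums ((1/2)^\<gamma>/3)"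
proof -
  have "(\<lambda>i. (1/2::real)^(\<gamma>+2) * (1/4)^i) sums ((1/2)^(\<gamma>+2) * (1 / (1 - 1/4)))"
    by (intro sums_mult geometric_sums) auto
  moreover have "(\<lambda>i. (1/2::real)^(i+\<gamma>+1) * bb \<gamma> (i+\<gamma>)) = (\<lambda>i. (1/2::real)^(\<gamma>+2) * (1/4)^i)"
  proof
    fix i
    have "(1/2::real)^(i+\<gamma>+1) * (1/2)^(i+1) = (1/2)^(\<gamma>+2) * ((1/2)^i*(1/2)^i)"
      by (simp add: power_add[symmetric] ac_simps)
    also have "\<dots> = (1/2)^(\<gamma>+2) * (1/4)^i" by (simp add: power_mult_distrib[symmetric])
    finally show "(1/2::real)^(i+\<gamma>+1) * bb \<gamma> (i+\<gamma>) = (1/2::real)^(\<gamma>+2) * (1/4)^i"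
      using assms by (simp add: bbpos)
  qed
  ultimately have "(\<lambda>i. (1/2::real)^(i+\<gamma>+1) * bb \<gamma> (i+\<gamma>)) sums ((1/2)^\<gamma>/3)"
    by (simp add: power_add)
  then have "(\<lambda>k. (1/2::real)^(k+1) * bb \<gamma> k) sums ((1/2)^\<gamma>/3 + (\<Sum>i<\<gamma>. (1/2::real)^(i+1) * bb \<gamma> i))"
    using sums_iff_shift[of "\<lambda>k. (1/2::real)^(k+1) * bb \<gamma> k" \<gamma>] by simp
  moreover have "(\<Sum>i<\<gamma>. (1/2::real)^(i+1) * bb \<gamma> i) = 0"
    using assms by (simp add: bbpos)
  ultimately show ?thesis by simp
qed

theorem theorem1:
  shows "(\<lambda>m. measure_pmf.prob (final_order WO m) {ord. B_event m 0 ord}) \<longlonglongrightarrow> 2 / 3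
    \<and> (\<forall>\<gamma>::nat. \<gamma> > 0 \<longrightarrow>
         (\<lambda>m. measure_pmf.prob (final_order WO m) {ord. B_event m \<gamma> ord}) \<longlonglongrightarrow> (1 / 2) ^ \<gamma> / 3)"
  unfolding prob_E pmf_E using lim_gen[OF sums0] lim_gen[OF sumspos] by blast


end
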